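(* Let $d\ge 1$ and let $X=\sum_{n\ge 0}\sum_{W\in\{1,\dots,d\}^n} X^W e_{w_1}\otimes\cdots\otimes e_{w_n}$ (with $W=(w_1,\dots,w_n)$, $X^W\in\mathbb{R}$) be an element of the tensor algebra over $\mathbb{R}^d$ whose radius of convergence $\rho(X)$ is strictly positive. Then $X$ is determined by its generating function $\Phi_X$ through the following explicit formula. Fix $n\ge 0$, a word $W=(w_1,\dots,w_n)\in\{1,\dots,d\}^n$, and any integer $k\ge n+1$. For $i\in\{1,\dots,d\}$ let $r^W(i)$ be the number of times $i$ appears in $W$, and for $1\le t\le r^W(i)$ let $p^W(i\,|\,t)$ be the position at which $i$ appears in $W$ for the $t$-th time. Define linear maps $M^W_1,\dots,M^W_d\in\mathcal{L}(\mathbb{R}^d;\mathfrak{so}(k,\mathbb{R}))$ by $$M^W_i(e_j)=\begin{cases}\sum_{t=1}^{r^W(i)}\left(E^{p^W(i|t)}_{p^W(i|t)+1}-E^{p^W(i|t)+1}_{p^W(i|t)}\right) & \text{if } i=j \text{ and } r^W(i)\neq 0,\\ 0 & \text{if } r^W(i)=0 \text{ or } i\ne j,\end{cases}$$ where $E^a_b$ is the $k\times k$ matrix with $(a,b)$-entry $1$ and all other entries $0$. For $\theta=(\theta_1,\dots,\theta_d)\in\mathbb{R}^d$ set $M^W_{(\theta)}=\sum_{i=1}^d\theta_i M^W_i$. Then $\theta\mapsto\Phi_X(M^W_{(\theta)})$ is defined and smooth for $\theta$ in a neighbourhood of $0$, and $$X^W=\frac{1}{\mathcal{C}_W}\times\left\{\text{the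 }(1,n+1)\text{-entry of the matrix } \frac{\partial^n\Phi_X(M^W_{(\theta)})}{\partial\theta_{w_1}\cdots\partial\theta_{w_n}}\Big|_{\theta=0}\right\},\qquad \mathcal{C}_W=\prod_{i=1}^d\big(r^W(i)!\big)$$ (with $0!=1$; for $n=0$ no derivative is taken and all $M^W_i=0$).
   Context: $\{e_1,\dots,e_d\}$ is the standard basis of $\mathbb{R}^d$. Elements of the tensor algebra are (formal) sequences $X=(\pi_0(X),\pi_1(X),\dots)$ with $\pi_n(X)\in(\mathbb{R}^d)^{\otimes n}$, $(\mathbb{R}^d)^{\otimes 0}=\mathbb{R}$; $\pi_n(X)=\sum_{W\in\{1,\dots,d\}^n}X^W e_{w_1}\otimes\cdots\otimes e_{w_n}$. $\mathbb{R}^d$ carries the $\ell_1$-norm and each $(\mathbb{R}^d)^{\otimes n}$ the projective tensor norm $\|\cdot\|$. The radius of convergence $\rho(X)\in[0,\infty]$ is the radius of convergence of the complex power series $\lambda\mapsto\sum_{n\ge0}\|\pi_n(X)\|\lambda^n$. $\mathfrak{su}(k)$ is the space of $k\times k$ skew-Hermitian complex matrices, $\mathfrak{so}(k,\mathbb{R})\subset\mathfrak{su}(k)$ the real antisymmetric ones, and $\mathfrak{gl}(k,\mathbb{C})$ all complex $k\times k$ matrices with the Hilbert–Schmidt norm. For $M\in\mathcal{L}(\mathbb{R}^d;\mathfrak{su}(k))$, the canonical extension $\widetilde M$ is the algebra homomorphism with $\widetilde M(1)=I_k$ and $\widetilde M(e_{i_1}\otimes\cdots\otimes e_{i_\ell})=M(e_{i_1})\cdots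 M(e_{i_\ell})$ (matrix product). The generating function of $X$ is $\Phi_X(M)=\widetilde M(X)=\sum_{n\ge0}\widetilde M(\pi_n(X))\in\mathfrak{gl}(k,\mathbb{C})$, defined whenever this series converges (in particular whenever the operator norm of $M$ is less than $\rho(X)$). *)

theory Defs
  imports "HOL-Analysis.Analysis"
begin

text \<open>Words over the alphabet 'd (a finite type with CARD('d) = d letters, standing for
  the basis e_1,...,e_d of R^d). A tensor-algebra element X is given by its coefficients
  X^W for all words W.\<close>

definition words :: "nat \<Rightarrow> 'd::finite list set" where
  "words n = {W. length W = n}"

text \<open>Projective tensor norm of pi_n(X) for the l1 norm on R^d:
  it equals the l1 norm of the coefficients.\<close>
definition proj_norm :: "('d::finite list \<Rightarrow> real) \<Rightarrow> nat \<Rightarrow> real" where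
  "proj_norm X n = (\<Sum>W\<in>words n. \<bar>X W\<bar>)"

definition radius :: "('d::finite list \<Rightarrow> real) \<Rightarrow> ereal" where
  "radius X = conv_radius (\<lambda>n. complex_of_real (proj_norm X n))"

text \<open>k x k complex matrices, represented by their entries indexed by 1..k.\<close>
type_synonym cmat = "nat \<Rightarrow> nat \<Rightarrow> complex"

definition mat_mult :: "nat \<Rightarrow> cmat \<Rightarrow> cmat \<Rightarrow> cmat" where
  "mat_mult k A B = (\<lambda>a b. \<Sum>c=1..k. A a c * B c b)"

definition mat_id :: cmat where
  "mat_id = (\<lambda>a b. if a = b then 1 else 0)"

text \<open>Canonical extension applied to a word: M(e_{v1}) ... M(e_{vn}); M is the linear map
  R^d -> gl(k) given by its values on the basis vectors.\<close>
fun mat_word :: "nat \<Rightarrow> ('d \<Rightarrow> cmat) \<Rightarrow> 'd list \<Rightarrow> cmat" where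
  "mat_word k M [] = mat_id"
| "mat_word k M (v # vs) = mat_mult k (M v) (mat_word k M vs)"

definition gen_term :: "nat \<Rightarrow> ('d::finite list \<Rightarrow> real) \<Rightarrow> ('d \<Rightarrow> cmat) \<Rightarrow> nat \<Rightarrow> cmat" where
  "gen_term k X M n = (\<lambda>a b. \<Sum>V\<in>words n. complex_of_real (X V) * mat_word k M V a b)"

definition Phi_defined :: "nat \<Rightarrow> ('d::finite list \<Rightarrow> real) \<Rightarrow> ('d \<Rightarrow> cmat) \<Rightarrow> bool" where
  "Phi_defined k X M = (\<forall>a\<in>{1..k}. \<forall>b\<in>{1..k}. summable (\<lambda>n. gen_term k X M n a b))"

definition Phi :: "nat \<Rightarrow> ('d::finite list \<Rightarrow> real) \<Rightarrow> ('d \<Rightarrow> cmat) \<Rightarrow> cmat" where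
  "Phi k X M = (\<lambda>a b. \<Sum>n. gen_term k X M n a b)"

text \<open>r^W(i), p^W(i|t) (1-based positions), E^a_b.\<close>
definition occ :: "'d list \<Rightarrow> 'd \<Rightarrow> nat" where
  "occ W i = count_list W i"

definition pos :: "'d list \<Rightarrow> 'd \<Rightarrow> nat \<Rightarrow> nat" where
  "pos W i t = [q + 1. q \<leftarrow> [0..<length W], W ! q = i] ! (t - 1)"

definition Emat :: "nat \<Rightarrow> nat \<Rightarrow> cmat" where
  "Emat a b = (\<lambda>x y. if x = a \<and> y = b then 1 else 0)"

definition MW :: "'d list \<Rightarrow> 'd \<Rightarrow> 'd \<Rightarrow> cmat" where
  "MW W i j = (if i = j \<and> occ W i \<noteq> 0 then
      (\<lambda>x y. \<Sum>t=1..occ W i. Emat (pos W i t) (pos W i t + 1) x y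
                              - Emat (pos W i t + 1) (pos W i t) x y)
    else (\<lambda>x y. 0))"

definition Mtheta :: "'d::finite list \<Rightarrow> real^'d \<Rightarrow> 'd \<Rightarrow> cmat" where
  "Mtheta W \<theta> j = (\<lambda>x y. \<Sum>i\<in>UNIV. complex_of_real (\<theta> $ i) * MW W i j x y)"

definition partial :: "'d::finite \<Rightarrow> (real^'d \<Rightarrow> complex) \<Rightarrow> real^'d \<Rightarrow> complex" where
  "partial i f \<theta> = vector_derivative (\<lambda>t. f (\<theta> + t *\<^sub>R axis i 1)) (at 0)"

fun iter_partial :: "'d::finite list \<Rightarrow> (real^'d \<Rightarrow> complex) \<Rightarrow> real^'d \<Rightarrow> complex" where
  "iter_partial [] f = f"
| "iter_partial (i # is) f = partial i (iter_partial is f)"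

definition smooth_on :: "(real^'d::finite) set \<Rightarrow> (real^'d \<Rightarrow> complex) \<Rightarrow> bool" where
  "smooth_on U f = (\<forall>is. continuous_on U (iter_partial is f) \<and>
     (\<forall>\<theta>\<in>U. \<forall>i. (\<lambda>t. iter_partial is f (\<theta> + t *\<^sub>R axis i 1)) differentiable (at 0)))"

end

theory Submission imports Defs begin

definition pm :: "('d::finite \<Rightarrow> nat) \<Rightarrow> real^'d \<Rightarrow> real" where
  "pm e \<theta> = (\<Prod>i\<in>UNIV. (\<theta>$i)^(e i))"

lemma line_nth: "(\<theta> + t *\<^sub>R axis i 1) $ j = (if j = i then \<theta>$j + t else \<theta>$j)"
  by (simp add: axis_def)

lemma pm_split: "pm e \<phi> = (\<phi>$i) ^ e i * (\<Prod>j\<in>UNIV-{i}. (\<phi>$j)^(e j))"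
  unfolding pm_def by (simp add: prod.remove)

lemma pm_line_deriv:
  "((\<lambda>t. pm e (\<theta> + t *\<^sub>R axis i 1)) has_real_derivative
     (real (e i) * pm (e(i := e i - 1)) (\<theta> + t *\<^sub>R axis i 1))) (at t)"
proof -
  define C where "C = (\<Prod>j\<in>UNIV-{i}. (\<theta>$j)^(e j))"
  have C1: "(\<Prod>j\<in>UNIV-{i}. ((\<theta> + s *\<^sub>R axis i 1)$j)^(e j)) = C" for s
    unfolding C_def by (rule prod.cong) (auto simp: line_nth axis_def)
  have C2: "(\<Prod>j\<in>UNIV-{i}. ((\<theta> + s *\<^sub>R axis i 1)$j)^((e(i := e i - 1)) j)) = C" for s
    unfolding C_def by (rule prod.cong) (auto simp: line_nth axis_def)
  have eq1: "pm e (\<theta> + s *\<^sub>R axis i 1) = (\<theta>$i + s) ^ e i * C" for s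
    using pm_split[of e _ i] C1 by (simp add: line_nth)
  have eq2: "pm (e(i := e i - 1)) (\<theta> + s *\<^sub>R axis i 1) = (\<theta>$i + s) ^ (e i - 1) * C" for s
    using pm_split[of "e(i := e i - 1)" _ i] C2 by (simp add: line_nth)
  show ?thesis unfolding eq1 eq2
    by (auto intro!: derivative_eq_intros)
qed

definition ff :: "nat \<Rightarrow> nat \<Rightarrow> nat" where
  "ff a j = (\<Prod>l<j. a - l)"

lemma ff_Suc: "ff a (Suc j) = ff a j * (a - j)"
  by (simp add: ff_def)

lemma ff_fact_mult: "j \<le> a \<Longrightarrow> ff a j * fact (a - j) = (fact a :: nat)"
proof (induction j)
  case 0 then show ?case by (simp add: ff_def)
next
  case (Suc j)
  then have "a - j = Suc (a - Suc j)" by simp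
  then have "fact (a - j) = (a - j) * (fact (a - Suc j) :: nat)" by simp
  with Suc show ?case by (simp add: ff_Suc mult.assoc mult.commute mult.left_commute)
qed

lemma ff_self: "ff a a = fact a"
  using ff_fact_mult[of a a] by simp

lemma ff_bound: "ff a j \<le> fact j * 2 ^ a"
proof (cases "j \<le> a")
  case True
  have "fact j * fact (a - j) * (a choose j) = (fact a :: nat)"
    by (rule binomial_fact_lemma[OF True])
  then have "ff a j * fact (a - j) = fact j * (a choose j) * fact (a - j)"
    using ff_fact_mult[OF True] by (simp add: ac_simps)
  then have "ff a j = fact j * (a choose j)" by simp
  also have "\<dots> \<le> fact j * 2 ^ a" using binomial_le_pow2[of a j] by simp
  finally show ?thesis .
next
  case False
  then have "ff a j = 0" unfolding ff_def by (intro prod_zero) (auto intro!: bexI[of _ a])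
  then show ?thesis by simp
qed

lemma prod_UNIV_split: "(\<Prod>j\<in>(UNIV::'a::finite set). g j) = g i * (\<Prod>j\<in>UNIV-{i}. g j)"
  by (simp add: prod.remove)

definition Cf :: "'d list \<Rightarrow> 'd::finite list \<Rightarrow> real" where
  "Cf is V = (\<Prod>i\<in>UNIV. real (ff (count_list V i) (count_list is i)))"

definition expo :: "'d list \<Rightarrow> 'd list \<Rightarrow> 'd \<Rightarrow> nat" where
  "expo V is = (\<lambda>i. count_list V i - count_list is i)"

lemma expo_Cons: "expo V (i # is) = (expo V is)(i := expo V is i - 1)"
  by (auto simp: expo_def fun_eq_iff)

lemma Cf_Cons: "Cf (i # is) V = Cf is V * real (expo V is i)"
proof -
  have "Cf (i # is) V = real (ff (count_list V i) (count_list (i#is) i)) *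
     (\<Prod>j\<in>UNIV-{i}. real (ff (count_list V j) (count_list (i#is) j)))"
    unfolding Cf_def by (rule prod_UNIV_split)
  also have "(\<Prod>j\<in>UNIV-{i}. real (ff (count_list V j) (count_list (i#is) j))) =
     (\<Prod>j\<in>UNIV-{i}. real (ff (count_list V j) (count_list is j)))"
    by (rule prod.cong) auto
  also have "Cf is V = real (ff (count_list V i) (count_list is i)) *
     (\<Prod>j\<in>UNIV-{i}. real (ff (count_list V j) (count_list is j)))"
    unfolding Cf_def by (rule prod_UNIV_split)
  ultimately show ?thesis by (simp add: ff_Suc expo_def)
qed

definition Tm :: "('d list \<Rightarrow> complex) \<Rightarrow> 'd list \<Rightarrow> nat \<Rightarrow> real^'d::finite \<Rightarrow> complex" where
  "Tm c is n \<theta> = (\<Sum>V\<in>words n. c V * complex_of_real (Cf is V * pm (expo V is) \<theta>))"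

lemma Tm_line_deriv:
  "((\<lambda>t. Tm c is n (\<theta> + t *\<^sub>R axis i 1)) has_vector_derivative
     Tm c (i # is) n (\<theta> + t *\<^sub>R axis i 1)) (at t)"
  unfolding Tm_def
  apply (rule has_vector_derivative_sum)
  apply (rule has_vector_derivative_mult_right)
  apply (rule has_vector_derivative_of_real)
  apply (rule DERIV_cong)
   apply (rule DERIV_cmult)
   apply (rule pm_line_deriv)
  apply (simp add: Cf_Cons expo_Cons)
  done

lemma sum_count_UNIV: "(\<Sum>i\<in>(UNIV::'a::finite set). count_list V i) = length V"
  by (rule sum_count_set) auto

lemma finite_words: "finite (words n :: 'd::finite list set)"
  unfolding words_def using finite_lists_length_eq[of "UNIV::'d set" n] by simp

lemma Cf_bound:
  assumes "V \<in> words n"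
  shows "Cf is V \<le> real (\<Prod>i\<in>UNIV. fact (count_list is i)) * 2 ^ n"
proof -
  have "Cf is V \<le> (\<Prod>i\<in>UNIV. real (fact (count_list is i)) * 2 ^ count_list V i)"
    unfolding Cf_def
  proof (rule prod_mono)
    fix i :: 'a assume "i \<in> UNIV"
    have "real (ff (count_list V i) (count_list is i)) \<le> real (fact (count_list is i) * 2 ^ count_list V i)"
      using ff_bound by (simp only: of_nat_le_iff)
    then show "0 \<le> real (ff (count_list V i) (count_list is i)) \<and>
      real (ff (count_list V i) (count_list is i)) \<le> real (fact (count_list is i)) * 2 ^ count_list V i"
      by simp
  qed
  also have "\<dots> = real (\<Prod>i\<in>UNIV. fact (count_list is i)) * 2 ^ (\<Sum>i\<in>UNIV. count_list V i)"
    by (simp add: prod.distrib power_sum)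
  also have "(\<Sum>i\<in>UNIV. count_list V i) = n" using assms by (simp add: sum_count_UNIV words_def)
  finally show ?thesis .
qed

lemma pm_bound:
  assumes "norm x \<le> R"
  shows "\<bar>pm e x\<bar> \<le> R ^ (\<Sum>i\<in>UNIV. e i)"
proof -
  have "\<bar>pm e x\<bar> = (\<Prod>i\<in>UNIV. \<bar>x$i\<bar> ^ e i)" unfolding pm_def by (simp add: abs_prod power_abs)
  also have "\<dots> \<le> (\<Prod>i\<in>UNIV. R ^ e i)"
  proof (rule prod_mono)
    fix i
    have "\<bar>x$i\<bar> \<le> R" using component_le_norm_cart[of x i] assms by simp
    then show "0 \<le> \<bar>x $ i\<bar> ^ e i \<and> \<bar>x $ i\<bar> ^ e i \<le> R ^ e i"
      by (simp add: power_mono)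
  qed
  also have "\<dots> = R ^ (\<Sum>i\<in>UNIV. e i)" by (simp add: power_sum)
  finally show ?thesis .
qed

lemma expo_sum:
  assumes "V \<in> words n"
  shows "n - length is \<le> (\<Sum>i\<in>UNIV. expo V is i)"
proof -
  have "n = (\<Sum>i\<in>UNIV. count_list V i)" using assms by (simp add: sum_count_UNIV words_def)
  also have "\<dots> \<le> (\<Sum>i\<in>UNIV. expo V is i + count_list is i)"
    by (rule sum_mono) (simp add: expo_def)
  also have "\<dots> = (\<Sum>i\<in>UNIV. expo V is i) + length is" by (simp add: sum.distrib sum_count_UNIV)
  finally show ?thesis by simp
qed

lemma Tm_bound:
  fixes c :: "'d::finite list \<Rightarrow> complex" and x :: "real^'d"
  assumes "norm x \<le> R" "0 < R" "R \<le> 1"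
  shows "norm (Tm c is n x) \<le> real (\<Prod>i\<in>UNIV. fact (count_list is i)) * 2 ^ n *
     (\<Sum>V\<in>words n. norm (c V)) * R ^ (n - length is)"
proof -
  define P where "P = real (\<Prod>i\<in>UNIV. fact (count_list is i))"
  have "norm (Tm c is n x) \<le> (\<Sum>V\<in>words n. norm (c V * complex_of_real (Cf is V * pm (expo V is) x)))"
    unfolding Tm_def by (rule norm_sum)
  also have "\<dots> \<le> (\<Sum>V\<in>words n. norm (c V) * (P * 2 ^ n * R ^ (n - length is)))"
  proof (rule sum_mono)
    fix V :: "'d list" assume V: "V \<in> words n"
    have c0: "0 \<le> Cf is V" unfolding Cf_def by (simp add: prod_nonneg)
    have "\<bar>pm (expo V is) x\<bar> \<le> R ^ (\<Sum>i\<in>UNIV. expo V is i)" by (rule pm_bound[OF assms(1)])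
    also have "\<dots> \<le> R ^ (n - length is)"
      by (rule power_decreasing[OF expo_sum[OF V]]) (use assms in auto)
    finally have p: "\<bar>pm (expo V is) x\<bar> \<le> R ^ (n - length is)" .
    have "\<bar>Cf is V * pm (expo V is) x\<bar> = Cf is V * \<bar>pm (expo V is) x\<bar>" using c0 by (simp add: abs_mult)
    also have "\<dots> \<le> (P * 2 ^ n) * R ^ (n - length is)"
      by (rule mult_mono) (use Cf_bound[OF V, of "is"] p c0 in \<open>auto simp: P_def\<close>)
    finally show "norm (c V * complex_of_real (Cf is V * pm (expo V is) x)) \<le> norm (c V) * (P * 2 ^ n * R ^ (n - length is))"
      by (simp add: norm_mult mult_left_mono)
  qed
  also have "\<dots> = P * 2 ^ n * (\<Sum>V\<in>words n. norm (c V)) * R ^ (n - length is)"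
    by (simp add: sum_distrib_right sum_distrib_left ac_simps)
  finally show ?thesis by (simp add: P_def)
qed

definition G :: "('d list \<Rightarrow> complex) \<Rightarrow> 'd list \<Rightarrow> real^'d::finite \<Rightarrow> complex" where
  "G c is \<theta> = (\<Sum>n. Tm c is n \<theta>)"

lemma Bnd_summable:
  fixes cn :: "nat \<Rightarrow> real"
  assumes "0 < R" "R \<le> 1" "summable (\<lambda>n. cn n * (2*R)^n)" "\<And>n. 0 \<le> cn n" "0 \<le> P"
  shows "summable (\<lambda>n. P * 2 ^ n * cn n * R ^ (n - p))"
proof (rule summable_comparison_test[OF _ summable_mult[OF assms(3), of "P / R^p"]])
  show "\<exists>N. \<forall>n\<ge>N. norm (P * 2 ^ n * cn n * R ^ (n - p)) \<le> P / R ^ p * (cn n * (2 * R) ^ n)"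
  proof (intro exI allI impI)
    fix n :: nat
    have Rp: "0 < R ^ p" using assms by simp
    have key: "R ^ (n - p) * R ^ p \<le> R ^ n"
    proof (cases "p \<le> n")
      case True
      then have "R ^ n = R ^ (n - p) * R ^ p" by (simp flip: power_add)
      then show ?thesis by simp
    next
      case False
      then have "R ^ p \<le> R ^ n" by (intro power_decreasing) (use assms in auto)
      then show ?thesis using False by simp
    qed
    have "R ^ (n - p) \<le> R ^ n / R ^ p" using key Rp by (simp add: field_simps)
    then have "P * 2 ^ n * cn n * R ^ (n - p) \<le> P * 2 ^ n * cn n * (R ^ n / R ^ p)"
      by (intro mult_left_mono) (use assms in auto)
    also have "\<dots> = P / R ^ p * (cn n * (2 * R) ^ n)" by (simp add: power_mult_distrib field_simps)
    finally show "norm (P * 2 ^ n * cn n * R ^ (n - p)) \<le> P / R ^ p * (cn n * (2 * R) ^ n)"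
      using assms by (simp add: abs_mult)
  qed
qed

lemma G_term_summable:
  fixes c :: "'d::finite list \<Rightarrow> complex"
  assumes cn: "\<And>s. 0 \<le> s \<Longrightarrow> s < \<sigma> \<Longrightarrow> summable (\<lambda>n. (\<Sum>V\<in>words n. norm (c V)) * s^n)"
    and R: "0 < R" "R < min 1 (\<sigma>/2)"
  shows "summable (\<lambda>n. real (\<Prod>i\<in>UNIV. fact (count_list is i)) * 2 ^ n *
     (\<Sum>V\<in>words n. norm (c V)) * R ^ (n - length is))"
proof (rule Bnd_summable)
  show "summable (\<lambda>n. (\<Sum>V\<in>words n. norm (c V)) * (2 * R) ^ n)"
    by (rule cn) (use R in auto)
qed (use R in \<open>auto intro!: sum_nonneg prod_nonneg\<close>)

lemma Tm_continuous: "continuous_on A (Tm c is n)"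
  unfolding Tm_def pm_def by (intro continuous_intros)

lemma G_cont:
  fixes c :: "'d::finite list \<Rightarrow> complex"
  assumes cn: "\<And>s. 0 \<le> s \<Longrightarrow> s < \<sigma> \<Longrightarrow> summable (\<lambda>n. (\<Sum>V\<in>words n. norm (c V)) * s^n)"
    and "0 < \<sigma>"
  shows "continuous_on (ball 0 (min 1 (\<sigma>/2))) (G c is)"
proof (rule continuous_at_imp_continuous_on, intro ballI)
  fix \<theta> :: "real^'d" assume th: "\<theta> \<in> ball 0 (min 1 (\<sigma>/2))"
  define \<rho> where "\<rho> = min 1 (\<sigma>/2)"
  define R where "R = (norm \<theta> + \<rho>) / 2"
  have n0: "0 \<le> norm \<theta>" by simp
  have th': "norm \<theta> < \<rho>" using th by (simp add: \<rho>_def)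
  have r0: "0 < \<rho>" using th' n0 by linarith
  have R0a: "0 < R" unfolding R_def using add_nonneg_pos[OF n0 r0] by simp
  have R0b: "R < \<rho>" unfolding R_def using th' by (simp add: field_simps)
  have R0c: "norm \<theta> < R" unfolding R_def using th' by (simp add: field_simps)
  note R0 = R0a R0b R0c
  then have R: "0 < R" "R < min 1 (\<sigma>/2)" "norm \<theta> < R" by (simp_all add: \<rho>_def)
  have "continuous_on (ball 0 R) (G c is)"
  proof (rule uniform_limit_theorem)
    show "\<forall>\<^sub>F n in sequentially. continuous_on (ball 0 R) (\<lambda>x. \<Sum>i<n. Tm c is i x)"
      by (intro always_eventually allI continuous_on_sum Tm_continuous)
    show "uniform_limit (ball 0 R) (\<lambda>n x. \<Sum>i<n. Tm c is i x) (G c is) sequentially"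
      unfolding G_def
      by (rule Weierstrass_m_test[OF Tm_bound G_term_summable[OF cn R(1,2)]])
         (use R in auto)
  qed simp
  then show "isCont (G c is) \<theta>"
    using R(3) by (simp add: continuous_on_eq_continuous_at)
qed

lemma G_line_deriv:
  fixes c :: "'d::finite list \<Rightarrow> complex"
  assumes cn: "\<And>s. 0 \<le> s \<Longrightarrow> s < \<sigma> \<Longrightarrow> summable (\<lambda>n. (\<Sum>V\<in>words n. norm (c V)) * s^n)"
    and "0 < \<sigma>" and th: "\<theta> \<in> ball 0 (min 1 (\<sigma>/2))"
  shows "((\<lambda>t. G c is (\<theta> + t *\<^sub>R axis i 1)) has_vector_derivative G c (i # is) \<theta>) (at 0)"
proof -
  define \<rho> where "\<rho> = min 1 (\<sigma>/2)"
  define R where "R = (norm \<theta> + \<rho>) / 2"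
  have n0: "0 \<le> norm \<theta>" by simp
  have th': "norm \<theta> < \<rho>" using th by (simp add: \<rho>_def)
  have r0: "0 < \<rho>" using th' n0 by linarith
  have R0a: "0 < R" unfolding R_def using add_nonneg_pos[OF n0 r0] by simp
  have R0b: "R < \<rho>" unfolding R_def using th' by (simp add: field_simps)
  have R0c: "norm \<theta> < R" unfolding R_def using th' by (simp add: field_simps)
  have R: "0 < R" "R < min 1 (\<sigma>/2)" "norm \<theta> < R" using R0a R0b R0c by (simp_all add: \<rho>_def)
  define S where "S = ball (0::real) (R - norm \<theta>)"
  have S0: "0 \<in> S" using R0c by (simp add: S_def)
  have cS: "convex S" by (simp add: S_def)
  have Sn: "norm (\<theta> + t *\<^sub>R axis i 1) \<le> R" if "t \<in> S" for t
  proof -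
    have "norm (\<theta> + t *\<^sub>R axis i 1) \<le> norm \<theta> + norm (t *\<^sub>R axis i (1::real))"
      by (rule norm_triangle_ineq)
    also have "\<dots> = norm \<theta> + \<bar>t\<bar>" by simp
    finally show ?thesis using that by (simp add: S_def)
  qed
  define f where "f n t = Tm c is n (\<theta> + t *\<^sub>R axis i 1)" for n t
  define f' where "f' n t = Tm c (i # is) n (\<theta> + t *\<^sub>R axis i 1)" for n t
  have ul: "uniform_limit S (\<lambda>n t. \<Sum>j<n. f' j t) (\<lambda>t. \<Sum>j. f' j t) sequentially"
    unfolding f'_def
    by (rule Weierstrass_m_test[OF Tm_bound G_term_summable[OF cn R(1,2)]])
       (use R Sn in auto)
  have sm: "(\<lambda>n. f n 0) sums (\<Sum>n. f n 0)"
  proof (rule summable_sums, rule summable_norm_cancel, rule summable_comparison_test)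
    show "summable (\<lambda>n. real (\<Prod>i\<in>UNIV. fact (count_list is i)) * 2 ^ n *
     (\<Sum>V\<in>words n. norm (c V)) * R ^ (n - length is))" by (rule G_term_summable[OF cn R(1,2)])
    show "\<exists>N. \<forall>n\<ge>N. norm (norm (f n 0)) \<le> real (\<Prod>i\<in>UNIV. fact (count_list is i)) * 2 ^ n *
     (\<Sum>V\<in>words n. norm (c V)) * R ^ (n - length is)"
      unfolding f_def using Tm_bound[OF Sn[OF S0] R(1)] R by auto
  qed
  have "\<exists>g. \<forall>x\<in>S. (\<lambda>n. f n x) sums (g x) \<and>
      (g has_derivative (\<lambda>h. h *\<^sub>R (\<Sum>j. f' j x))) (at x within S)"
  proof (rule has_derivative_series[where f=f and f'="\<lambda>n x h. h *\<^sub>R f' n x" and x=0, OF cS _ _ S0 sm])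
    show "((f n) has_derivative (\<lambda>h. h *\<^sub>R f' n x)) (at x within S)" if "x \<in> S" for n x
      unfolding f_def f'_def
      using has_vector_derivative_at_within[OF Tm_line_deriv]
      by (simp add: has_vector_derivative_def)
    show "\<forall>\<^sub>F n in sequentially. \<forall>x\<in>S. \<forall>h. norm ((\<Sum>j<n. h *\<^sub>R f' j x) - h *\<^sub>R (\<Sum>j. f' j x)) \<le> e * norm h"
      if "e > 0" for e
      using uniform_limitD[OF ul that]
    proof (rule eventually_mono)
      fix n assume A: "\<forall>x\<in>S. dist (\<Sum>j<n. f' j x) (\<Sum>j. f' j x) < e"
      show "\<forall>x\<in>S. \<forall>h. norm ((\<Sum>j<n. h *\<^sub>R f' j x) - h *\<^sub>R (\<Sum>j. f' j x)) \<le> e * norm h"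
      proof (intro ballI allI)
        fix x h assume x: "x \<in> S"
        have "norm ((\<Sum>j<n. h *\<^sub>R f' j x) - h *\<^sub>R (\<Sum>j. f' j x)) =
              \<bar>h\<bar> * dist (\<Sum>j<n. f' j x) (\<Sum>j. f' j x)"
          by (simp add: dist_norm flip: scaleR_sum_right scaleR_diff_right)
        also have "\<dots> \<le> \<bar>h\<bar> * e" using A x by (intro mult_left_mono) auto
        finally show "norm ((\<Sum>j<n. h *\<^sub>R f' j x) - h *\<^sub>R (\<Sum>j. f' j x)) \<le> e * norm h"
          by (simp add: mult.commute)
      qed
    qed
  qed
  then obtain g where g: "\<And>x. x \<in> S \<Longrightarrow> (\<lambda>n. f n x) sums (g x)"
    "\<And>x. x \<in> S \<Longrightarrow> (g has_derivative (\<lambda>h. h *\<^sub>R (\<Sum>j. f' j x))) (at x within S)" by blast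
  have "(g has_vector_derivative (\<Sum>j. f' j 0)) (at 0)"
    using g(2)[OF S0] at_within_open[OF S0] by (simp add: has_vector_derivative_def S_def)
  moreover have "(\<Sum>j. f' j 0) = G c (i # is) \<theta>" by (simp add: f'_def G_def)
  moreover have "g t = G c is (\<theta> + t *\<^sub>R axis i 1)" if "t \<in> S" for t
    using sums_unique[OF g(1)[OF that]] by (simp add: f_def G_def)
  ultimately show ?thesis
    using has_vector_derivative_transform_within_open[of g _ 0 S] S0 by (auto simp: S_def)
qed

lemma open_line_pre: "open {t::real. \<theta> + t *\<^sub>R axis i 1 \<in> ball (0::real^'d::finite) r}"
proof -
  have "{t::real. \<theta> + t *\<^sub>R axis i 1 \<in> ball (0::real^'d) r} = {t. norm (\<theta> + t *\<^sub>R axis i 1) < r}"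
    by auto
  also have "open \<dots>"
    by (rule open_Collect_less) (intro continuous_intros)+
  finally show ?thesis .
qed

lemma iter_G:
  fixes c :: "'d::finite list \<Rightarrow> complex"
  assumes cn: "\<And>s. 0 \<le> s \<Longrightarrow> s < \<sigma> \<Longrightarrow> summable (\<lambda>n. (\<Sum>V\<in>words n. norm (c V)) * s^n)"
    and s0: "0 < \<sigma>"
  shows "\<forall>\<theta>\<in>ball 0 (min 1 (\<sigma>/2)). iter_partial is (G c []) \<theta> = G c is \<theta> \<and>
     (\<forall>i. ((\<lambda>t. iter_partial is (G c []) (\<theta> + t *\<^sub>R axis i 1)) has_vector_derivative G c (i # is) \<theta>) (at 0))"
proof (induction "is")
  case Nil
  then show ?case using G_line_deriv[OF cn s0] by simp
next
  case (Cons j js)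
  define U where "U = ball (0::real^'d) (min 1 (\<sigma>/2))"
  have A: "iter_partial (j # js) (G c []) \<theta> = G c (j # js) \<theta>" if th: "\<theta> \<in> U" for \<theta>
  proof -
    have "((\<lambda>t. iter_partial js (G c []) (\<theta> + t *\<^sub>R axis j 1)) has_vector_derivative G c (j # js) \<theta>) (at 0)"
      using Cons th unfolding U_def by blast
    then show ?thesis by (simp add: partial_def vector_derivative_at)
  qed
  show ?case
  proof (intro ballI conjI allI)
    fix \<theta> :: "real^'d" assume th: "\<theta> \<in> ball 0 (min 1 (\<sigma>/2))"
    show "iter_partial (j # js) (G c []) \<theta> = G c (j # js) \<theta>" using A th by (simp add: U_def)
    fix i :: 'd
    show "((\<lambda>t. iter_partial (j # js) (G c []) (\<theta> + t *\<^sub>R axis i 1)) has_vector_derivative G c (i # j # js) \<theta>) (at 0)"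
    proof (rule has_vector_derivative_transform_within_open[OF G_line_deriv[OF cn s0 th]])
      show "open {t::real. \<theta> + t *\<^sub>R axis i 1 \<in> U}" unfolding U_def by (rule open_line_pre)
      show "0 \<in> {t::real. \<theta> + t *\<^sub>R axis i 1 \<in> U}" using th by (simp add: U_def)
      show "G c (j # js) (\<theta> + t *\<^sub>R axis i 1) = iter_partial (j # js) (G c []) (\<theta> + t *\<^sub>R axis i 1)"
        if "t \<in> {t::real. \<theta> + t *\<^sub>R axis i 1 \<in> U}" for t
        using A that by simp
    qed
  qed
qed

lemma smooth_G:
  fixes c :: "'d::finite list \<Rightarrow> complex"
  assumes cn: "\<And>s. 0 \<le> s \<Longrightarrow> s < \<sigma> \<Longrightarrow> summable (\<lambda>n. (\<Sum>V\<in>words n. norm (c V)) * s^n)"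
    and s0: "0 < \<sigma>"
  shows "smooth_on (ball 0 (min 1 (\<sigma>/2))) (G c [])"
  unfolding smooth_on_def
proof (intro allI conjI ballI)
  fix "is" :: "'d list"
  show "continuous_on (ball 0 (min 1 (\<sigma>/2))) (iter_partial is (G c []))"
    using G_cont[OF cn s0, of "is"] iter_G[OF cn s0, of "is"]
    by (metis (no_types, lifting) continuous_on_cong)
  fix \<theta> i assume "\<theta> \<in> ball (0::real^'d) (min 1 (\<sigma>/2))"
  then show "(\<lambda>t. iter_partial is (G c []) (\<theta> + t *\<^sub>R axis i 1)) differentiable at 0"
    using iter_G[OF cn s0, of "is"] differentiableI_vector by blast
qed

lemma MW_off: "i \<noteq> j \<Longrightarrow> MW W i j x y = 0"
  by (simp add: MW_def)

lemma Mtheta_eq: "Mtheta W \<theta> j x y = complex_of_real (\<theta>$j) * MW W j j x y"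
proof -
  have "Mtheta W \<theta> j x y = (\<Sum>i\<in>UNIV. if i = j then complex_of_real (\<theta>$j) * MW W j j x y else 0)"
    unfolding Mtheta_def by (rule sum.cong) (auto simp: MW_off)
  then show ?thesis by simp
qed

lemma pm_Cons: "pm (count_list (v # V)) \<theta> = \<theta>$v * pm (count_list V) \<theta>"
proof -
  have "pm (count_list (v # V)) \<theta> = (\<theta>$v) ^ (count_list V v + 1) * (\<Prod>j\<in>UNIV-{v}. (\<theta>$j)^(count_list (v#V) j))"
    using pm_split[of "count_list (v # V)" \<theta> v] by simp
  also have "(\<Prod>j\<in>UNIV-{v}. (\<theta>$j)^(count_list (v#V) j)) = (\<Prod>j\<in>UNIV-{v}. (\<theta>$j)^(count_list V j))"
    by (rule prod.cong) auto
  also have "pm (count_list V) \<theta> = (\<theta>$v) ^ (count_list V v) * (\<Prod>j\<in>UNIV-{v}. (\<theta>$j)^(count_list V j))"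
    by (rule pm_split)
  moreover have "count_list (v#V) = (\<lambda>a. if v = a then count_list V a + 1 else count_list V a)"
    by auto
  ultimately show ?thesis by simp
qed

lemma mat_word_scale:
  "mat_word k (Mtheta W \<theta>) V x y = complex_of_real (pm (count_list V) \<theta>) * mat_word k (\<lambda>j. MW W j j) V x y"
proof (induction V arbitrary: x y)
  case Nil
  then show ?case by (simp add: pm_def)
next
  case (Cons v V)
  have "mat_word k (Mtheta W \<theta>) (v # V) x y =
     (\<Sum>c=1..k. complex_of_real (\<theta>$v) * MW W v v x c * (complex_of_real (pm (count_list V) \<theta>) * mat_word k (\<lambda>j. MW W j j) V c y))"
    by (simp add: mat_mult_def Mtheta_eq Cons)
  also have "\<dots> = complex_of_real (\<theta>$v * pm (count_list V) \<theta>) * (\<Sum>c=1..k. MW W v v x c * mat_word k (\<lambda>j. MW W j j) V c y)"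
    by (simp add: sum_distrib_left ac_simps)
  finally show ?case unfolding pm_Cons by (simp add: mat_mult_def)
qed

lemma Emat_norm: "norm (Emat a b x y) \<le> 1"
  by (simp add: Emat_def)

lemma MW_bound: "norm (MW W i j x y) \<le> 2 * real (length W)"
proof (cases "i = j \<and> occ W i \<noteq> 0")
  case True
  have "norm (MW W i j x y) \<le> (\<Sum>t=1..occ W i. norm (Emat (pos W i t) (pos W i t + 1) x y
                              - Emat (pos W i t + 1) (pos W i t) x y))"
    using True unfolding MW_def by (simp add: norm_sum)
  also have "\<dots> \<le> (\<Sum>t=1..occ W i. 2)"
  proof (rule sum_mono)
    fix t
    have "norm (Emat (pos W i t) (pos W i t + 1) x y - Emat (pos W i t + 1) (pos W i t) x y) \<le>
       norm (Emat (pos W i t) (pos W i t + 1) x y) + norm (Emat (pos W i t + 1) (pos W i t) x y)"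
      by (rule norm_triangle_ineq4)
    also have "\<dots> \<le> 2" using Emat_norm[of "pos W i t" "pos W i t + 1" x y] Emat_norm[of "pos W i t + 1" "pos W i t" x y]
      by linarith
    finally show "norm (Emat (pos W i t) (pos W i t + 1) x y - Emat (pos W i t + 1) (pos W i t) x y) \<le> 2" .
  qed
  also have "\<dots> = 2 * real (occ W i)" by simp
  also have "\<dots> \<le> 2 * real (length W)" using count_le_length[of W i] by (simp add: occ_def)
  finally show ?thesis .
next
  case False
  then show ?thesis by (auto simp: MW_def)
qed

lemma mat_word_bound:
  assumes "\<And>v x y. norm (N v x y) \<le> L" "0 \<le> L"
  shows "norm (mat_word k N V x y) \<le> (real k * L) ^ length V"
proof (induction V arbitrary: x y)
  case Nil
  then show ?case by (simp add: mat_id_def)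
next
  case (Cons v V)
  have "norm (mat_word k N (v # V) x y) \<le> (\<Sum>c=1..k. norm (N v x c * mat_word k N V c y))"
    by (simp add: mat_mult_def norm_sum)
  also have "\<dots> \<le> (\<Sum>c=1..k. L * (real k * L) ^ length V)"
    by (rule sum_mono) (simp add: norm_mult mult_mono assms Cons)
  also have "\<dots> = (real k * L) ^ length (v # V)" by simp
  finally show ?case .
qed

lemma MW_shape: "MW W i j x y \<noteq> 0 \<Longrightarrow> y = x + 1 \<or> x = y + 1"
proof (rule ccontr)
  assume nz: "MW W i j x y \<noteq> 0" and h: "\<not> (y = x + 1 \<or> x = y + 1)"
  have "MW W i j x y = 0"
    unfolding MW_def using h by (auto simp: Emat_def intro!: sum.neutral)
  with nz show False by simp
qed

definition posl :: "'d list \<Rightarrow> 'd \<Rightarrow> nat list" where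
  "posl W v = [q + 1. q \<leftarrow> [0..<length W], W ! q = v]"

lemma concat_map_if: "concat (map (\<lambda>q. if P q then [f q] else []) xs) = map f (filter P xs)"
  by (induction xs) auto

lemma posl_eq: "posl W v = map Suc (filter (\<lambda>q. W ! q = v) [0..<length W])"
  unfolding posl_def by (simp add: concat_map_if)

lemma posl_length: "length (posl W v) = occ W v"
proof -
  have "length (posl W v) = card {i. i < length W \<and> W ! ([0..<length W] ! i) = v}"
    by (simp add: posl_eq length_filter_conv_card)
  also have "\<dots> = card {i. i < length W \<and> W ! i = v}"
    by (intro arg_cong[where f=card]) auto
  also have "\<dots> = occ W v"
    by (simp add: occ_def count_list_eq_length_filter length_filter_conv_card eq_commute)
  finally show ?thesis .
qed

lemma posl_distinct: "distinct (posl W v)"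
  by (simp add: posl_eq distinct_map)

lemma posl_set: "x \<in> set (posl W v) \<longleftrightarrow> 1 \<le> x \<and> x - 1 < length W \<and> W ! (x - 1) = v"
proof
  assume "1 \<le> x \<and> x - 1 < length W \<and> W ! (x - 1) = v"
  then show "x \<in> set (posl W v)" unfolding posl_eq
    by (auto simp: image_iff intro!: bexI[of _ "x - 1"])
qed (auto simp: posl_eq)

lemma MW_diag:
  assumes "1 \<le> x"
  shows "MW W v v x (x + 1) = (if x - 1 < length W \<and> W ! (x - 1) = v then 1 else 0)"
proof (cases "occ W v = 0")
  case True
  then have "v \<notin> set W" by (simp add: occ_def count_list_0_iff)
  then have "\<not> (x - 1 < length W \<and> W ! (x - 1) = v)" using nth_mem by blast
  with True show ?thesis by (simp add: MW_def)
next
  case False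
  have "MW W v v x (x + 1) = (\<Sum>t=1..occ W v. (if posl W v ! (t - 1) = x then 1 else 0))"
    unfolding MW_def using False by (auto simp: Emat_def pos_def posl_def intro!: sum.cong)
  also have "\<dots> = (\<Sum>t<length (posl W v). (if posl W v ! t = x then 1 else 0))"
    by (simp add: sum.atLeast1_atMost_eq posl_length)
  also have "\<dots> = sum_list (map (\<lambda>y. if y = x then 1 else 0) (posl W v))"
    by (simp add: sum_list_sum_nth atLeast0LessThan)
  also have "\<dots> = (\<Sum>y\<in>set (posl W v). if y = x then 1 else 0)"
    by (rule sum_list_distinct_conv_sum_set[OF posl_distinct])
  also have "\<dots> = (if x \<in> set (posl W v) then 1 else 0)"
    by simp
  finally show ?thesis using assms by (simp add: posl_set)
qed

lemma mat_word_zero: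
  "x + length V < y \<Longrightarrow> mat_word k (\<lambda>j. MW W j j) V x y = 0"
proof (induction V arbitrary: x)
  case Nil
  then show ?case by (simp add: mat_id_def)
next
  case (Cons v V)
  have "MW W v v x c * mat_word k (\<lambda>j. MW W j j) V c y = 0" for c
  proof (cases "MW W v v x c = 0")
    case False
    then have "c \<le> x + 1" using MW_shape by fastforce
    then have "c + length V < y" using Cons.prems by simp
    then show ?thesis using Cons.IH by simp
  qed simp
  then show ?case by (auto simp: mat_mult_def intro!: sum.neutral)
qed

lemma mat_word_diag:
  assumes "1 \<le> x" "x + length V \<le> k"
  shows "mat_word k (\<lambda>j. MW W j j) V x (x + length V) =
    (if \<forall>j<length V. x - 1 + j < length W \<and> W ! (x - 1 + j) = V ! j then 1 else 0)"
  using assms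
proof (induction V arbitrary: x)
  case Nil
  then show ?case by (simp add: mat_id_def)
next
  case (Cons v V)
  let ?N = "\<lambda>j. MW W j j"
  have "mat_word k ?N (v # V) x (x + length (v # V)) =
     (\<Sum>c\<in>{1..k}. MW W v v x c * mat_word k ?N V c (x + 1 + length V))"
    by (simp add: mat_mult_def)
  also have "\<dots> = MW W v v x (x + 1) * mat_word k ?N V (x + 1) (x + 1 + length V)"
  proof -
    have mem: "x + 1 \<in> {1..k}" using Cons.prems by simp
    have rest: "(\<Sum>c\<in>{1..k} - {x + 1}. MW W v v x c * mat_word k ?N V c (x + 1 + length V)) = 0"
    proof (rule sum.neutral, intro ballI)
      fix c assume c: "c \<in> {1..k} - {x + 1}"
      show "MW W v v x c * mat_word k ?N V c (x + 1 + length V) = 0"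
      proof (cases "MW W v v x c = 0")
        case False
        then have "x = c + 1" using MW_shape c by fastforce
        then have "c + length V < x + 1 + length V" by simp
        then show ?thesis using mat_word_zero[of c V "x + 1 + length V" k W] by simp
      qed simp
    qed
    show ?thesis using sum.remove[OF finite_atLeastAtMost mem, of "\<lambda>c. MW W v v x c * mat_word k ?N V c (x + 1 + length V)"] rest by simp
  qed
  also have "\<dots> = (if \<forall>j<length (v # V). x - 1 + j < length W \<and> W ! (x - 1 + j) = (v # V) ! j then 1 else 0)"
  proof -
    have ih: "mat_word k ?N V (x + 1) (x + 1 + length V) =
      (if \<forall>j<length V. x + 1 - 1 + j < length W \<and> W ! (x + 1 - 1 + j) = V ! j then 1 else 0)"
      using Cons.prems by (intro Cons.IH) auto
    have eq: "(\<forall>j<length (v # V). x - 1 + j < length W \<and> W ! (x - 1 + j) = (v # V) ! j) \<longleftrightarrow>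
       (x - 1 < length W \<and> W ! (x - 1) = v) \<and> (\<forall>j<length V. x + 1 - 1 + j < length W \<and> W ! (x + 1 - 1 + j) = V ! j)"
      using Cons.prems(1) by (simp add: All_less_Suc2)
    show ?thesis unfolding eq ih MW_diag[OF Cons.prems(1)] by simp
  qed
  finally show ?case .
qed

lemma G_summable:
  fixes c :: "'d::finite list \<Rightarrow> complex"
  assumes cn: "\<And>s. 0 \<le> s \<Longrightarrow> s < \<sigma> \<Longrightarrow> summable (\<lambda>n. (\<Sum>V\<in>words n. norm (c V)) * s^n)"
    and "0 < \<sigma>" and th: "\<theta> \<in> ball 0 (min 1 (\<sigma>/2))"
  shows "summable (\<lambda>n. Tm c is n \<theta>)"
proof -
  define \<rho> where "\<rho> = min 1 (\<sigma>/2)"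
  define R where "R = (norm \<theta> + \<rho>) / 2"
  have n0: "0 \<le> norm \<theta>" by simp
  have th': "norm \<theta> < \<rho>" using th by (simp add: \<rho>_def)
  have r0: "0 < \<rho>" using th' n0 by linarith
  have R0a: "0 < R" unfolding R_def using add_nonneg_pos[OF n0 r0] by simp
  have R0b: "R < \<rho>" unfolding R_def using th' by (simp add: field_simps)
  have R0c: "norm \<theta> < R" unfolding R_def using th' by (simp add: field_simps)
  have R: "0 < R" "R < min 1 (\<sigma>/2)" "norm \<theta> < R" using R0a R0b R0c by (simp_all add: \<rho>_def)
  show ?thesis
  proof (rule summable_norm_cancel, rule summable_comparison_test)
    show "summable (\<lambda>n. real (\<Prod>i\<in>UNIV. fact (count_list is i)) * 2 ^ n *
     (\<Sum>V\<in>words n. norm (c V)) * R ^ (n - length is))" by (rule G_term_summable[OF cn R(1,2)])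
    show "\<exists>N. \<forall>n\<ge>N. norm (norm (Tm c is n \<theta>)) \<le> real (\<Prod>i\<in>UNIV. fact (count_list is i)) * 2 ^ n *
     (\<Sum>V\<in>words n. norm (c V)) * R ^ (n - length is)"
      using Tm_bound[of \<theta> R c "is"] R by auto
  qed
qed

lemma pm_zero_nz: "pm e 0 \<noteq> 0 \<Longrightarrow> e i = 0"
  unfolding pm_def by (rule ccontr) (auto intro!: prod_zero bexI[of _ i])

lemma Tm_Nil: "Tm c [] n \<theta> = (\<Sum>V\<in>words n. c V * complex_of_real (pm (count_list V) \<theta>))"
proof -
  have "Cf [] V = 1" for V :: "'a list" by (simp add: Cf_def ff_def)
  moreover have "expo V [] = count_list V" for V :: "'a list" by (simp add: expo_def fun_eq_iff)
  ultimately show ?thesis by (simp add: Tm_def)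
qed

theorem theorem1p8:
  fixes X :: "'d::finite list \<Rightarrow> real" and W :: "'d list" and k :: nat
  assumes "radius X > 0" and "k \<ge> length W + 1"
  shows "\<exists>U. open U \<and> 0 \<in> U \<and> (\<forall>\<theta>\<in>U. Phi_defined k X (Mtheta W \<theta>)) \<and>
           (\<forall>a\<in>{1..k}. \<forall>b\<in>{1..k}. smooth_on U (\<lambda>\<theta>. Phi k X (Mtheta W \<theta>) a b)) \<and>
           complex_of_real (X W) =
             iter_partial W (\<lambda>\<theta>. Phi k X (Mtheta W \<theta>) 1 (length W + 1)) 0
             / of_nat (\<Prod>i\<in>UNIV. fact (occ W i))"
proof -
  define N where "N = (\<lambda>j. MW W j j)"
  define cc where "cc a b V = complex_of_real (X V) * mat_word k N V a b" for a b V
  define L where "L = 2 * real (length W) + 1"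
  define K where "K = real k * L"
  have L0: "0 \<le> L" by (simp add: L_def)
  have K0: "0 < K" using assms(2) by (simp add: K_def L_def)
  have NL: "norm (N v x y) \<le> L" for v x y
    using MW_bound[of W v v x y] by (simp add: N_def L_def)
  have ccb: "norm (cc a b V) \<le> \<bar>X V\<bar> * K ^ length V" for a b V
    unfolding cc_def K_def using mat_word_bound[where N=N and L=L and k=k and V=V and x=a and y=b, OF NL L0]
    by (simp add: norm_mult mult_left_mono)
  obtain z where z: "0 < z" "z < radius X" using dense assms(1) by blast
  define r where "r = real_of_ereal z"
  have rz: "ereal r = z" using z by (cases z) (auto simp: r_def)
  have r0: "0 < r" using z rz by (metis ereal_less(2))
  have Asum: "summable (\<lambda>n. proj_norm X n * r ^ n)"
  proof -
    have "summable (\<lambda>n. norm (complex_of_real (proj_norm X n) * complex_of_real r ^ n))"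
      by (rule abs_summable_in_conv_radius) (use z rz r0 in \<open>simp add: radius_def\<close>)
    moreover have "norm (complex_of_real (proj_norm X n) * complex_of_real r ^ n) = proj_norm X n * r ^ n" for n
    proof -
      have "proj_norm X n \<ge> 0" by (simp add: proj_norm_def sum_nonneg)
      then show ?thesis using r0 by (simp add: norm_mult norm_power del: of_real_sum)
    qed
    ultimately show ?thesis by simp
  qed
  define \<sigma> where "\<sigma> = r / K"
  have s0: "0 < \<sigma>" using r0 K0 by (simp add: \<sigma>_def)
  have cn: "summable (\<lambda>n. (\<Sum>V\<in>words n. norm (cc a b V)) * s^n)" if "0 \<le> s" "s < \<sigma>" for a b s
  proof (rule summable_comparison_test[OF _ Asum], intro exI allI impI)
    fix n :: nat
    have Ks: "K * s \<le> r" using that K0 by (simp add: \<sigma>_def field_simps)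
    have "(\<Sum>V\<in>words n. norm (cc a b V)) \<le> (\<Sum>V\<in>words n. \<bar>X V\<bar> * K ^ n)"
      by (rule sum_mono) (use ccb in \<open>auto simp: words_def\<close>)
    also have "\<dots> = proj_norm X n * K ^ n" by (simp add: proj_norm_def sum_distrib_right)
    finally have "(\<Sum>V\<in>words n. norm (cc a b V)) * s ^ n \<le> proj_norm X n * K ^ n * s ^ n"
      using that by (simp add: mult_right_mono)
    also have "\<dots> = proj_norm X n * (K * s) ^ n" by (simp add: power_mult_distrib)
    also have "\<dots> \<le> proj_norm X n * r ^ n"
      using Ks that K0 by (intro mult_left_mono power_mono) (auto simp: proj_norm_def sum_nonneg)
    finally show "norm ((\<Sum>V\<in>words n. norm (cc a b V)) * s ^ n) \<le> proj_norm X n * r ^ n"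
      using that by (simp add: sum_nonneg)
  qed
  have gt: "gen_term k X (Mtheta W \<theta>) n a b = Tm (cc a b) [] n \<theta>" for \<theta> n a b
    unfolding gen_term_def Tm_Nil cc_def by (simp add: mat_word_scale N_def ac_simps)
  have PhiG: "(\<lambda>\<theta>. Phi k X (Mtheta W \<theta>) a b) = G (cc a b) []" for a b
    by (simp add: fun_eq_iff Phi_def G_def gt)
  define U where "U = ball (0::real^'d) (min 1 (\<sigma>/2))"
  have U0: "0 \<in> U" using s0 by (simp add: U_def)
  show ?thesis
  proof (intro exI[of _ U] conjI ballI)
    show "open U" by (simp add: U_def)
    show "0 \<in> U" by (rule U0)
    show "Phi_defined k X (Mtheta W \<theta>)" if "\<theta> \<in> U" for \<theta>
      unfolding Phi_defined_def gt using G_summable[OF cn s0] that by (auto simp: U_def)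
    show "smooth_on U (\<lambda>\<theta>. Phi k X (Mtheta W \<theta>) a b)" for a b
      unfolding PhiG U_def by (rule smooth_G[OF cn s0])
    define n0 where "n0 = length W"
    define c where "c = cc 1 (n0 + 1)"
    define P where "P = (\<Prod>i\<in>UNIV. fact (count_list W i) :: nat)"
    define z0 where "z0 = complex_of_real (X W) * of_nat P"
    have ip: "iter_partial W (\<lambda>\<theta>. Phi k X (Mtheta W \<theta>) 1 (length W + 1)) 0 = G c W 0"
      using iter_G[OF cn s0, of W] U0 unfolding PhiG c_def n0_def U_def by blast
    have kk: "1 + length W \<le> k" using assms(2) by simp
    have trm: "c V * complex_of_real (Cf W V * pm (expo V W) 0) = (if V = W then z0 else 0)" for V
    proof (cases "V = W")
      case True
      have "mat_word k N W 1 (1 + length W) = 1"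
        using mat_word_diag[of 1 W k W] kk by (simp add: N_def)
      then have cW: "c W = complex_of_real (X W)" by (simp add: c_def cc_def n0_def)
      have "Cf W W = real P" by (simp add: Cf_def P_def ff_self)
      moreover have "expo W W = (\<lambda>_. 0)" by (simp add: expo_def fun_eq_iff)
      ultimately show ?thesis using True cW by (simp add: z0_def pm_def)
    next
      case False
      show ?thesis
      proof (rule ccontr)
        assume nz: "c V * complex_of_real (Cf W V * pm (expo V W) 0) \<noteq> (if V = W then z0 else 0)"
        then have cnz: "c V \<noteq> 0" and pnz: "pm (expo V W) 0 \<noteq> 0" using False by auto
        have "count_list V i \<le> count_list W i" for i
          using pm_zero_nz[OF pnz, of i] by (simp add: expo_def)
        then have "(\<Sum>i\<in>UNIV. count_list V i) \<le> (\<Sum>i\<in>UNIV. count_list W i)" by (intro sum_mono) auto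
        then have le1: "length V \<le> length W" by (simp add: sum_count_UNIV)
        have mnz: "mat_word k N V 1 (length W + 1) \<noteq> 0" using cnz by (simp add: c_def cc_def n0_def)
        then have "\<not> (1 + length V < length W + 1)" using mat_word_zero[of 1 V "length W + 1" k W] by (auto simp: N_def)
        with le1 have eqlen: "length V = length W" by simp
        have "mat_word k N V 1 (1 + length V) =
          (if \<forall>j<length V. 1 - 1 + j < length W \<and> W ! (1 - 1 + j) = V ! j then 1 else 0)"
          using mat_word_diag[of 1 V k W] kk eqlen by (simp add: N_def)
        with mnz eqlen have "\<forall>j<length V. W ! j = V ! j" by (auto split: if_splits simp: add.commute)
        with eqlen have "V = W" by (simp add: nth_equalityI)
        with False show False by simp
      qed
    qed
    have Tm0: "Tm c W n 0 = (if n = n0 then z0 else 0)" for n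
    proof -
      have "Tm c W n 0 = (\<Sum>V\<in>words n. if V = W then z0 else 0)"
        unfolding Tm_def using trm by simp
      also have "\<dots> = (if W \<in> words n then z0 else 0)" by (rule sum.delta[OF finite_words])
      also have "\<dots> = (if n = n0 then z0 else 0)" by (auto simp: words_def n0_def)
      finally show ?thesis .
    qed
    have "G c W 0 = z0"
      unfolding G_def Tm0 using sums_single[of n0 "\<lambda>_. z0"] by (simp add: sums_iff)
    then show "complex_of_real (X W) =
             iter_partial W (\<lambda>\<theta>. Phi k X (Mtheta W \<theta>) 1 (length W + 1)) 0
             / of_nat (\<Prod>i\<in>UNIV. fact (occ W i))"
      unfolding ip by (simp add: z0_def P_def occ_def)
  qed
qed

end
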